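(* Let $A\in\mathbb{R}^{n\times n}$, $B\in\mathbb{R}^{n\times m}$, $C\in\mathbb{R}^{p\times n}$ with $(A,C)$ observable and $(A,B)$ reachable, let $\ell$ be the observability index of $(A,C)$, and let $\mathbf{A}_\ell,\mathbf{B}_\ell$ be as in the context. Then the pair $(\mathbf{A}_\ell,\mathbf{B}_\ell)$ is reachable if and only if $p\ell=n$.
   Context: The observability index $\ell$ of an observable pair $(A,C)$ is the smallest $l$ with $\operatorname{rank}[C;CA;\dots;CA^{l-1}]=n$. Define $\mathcal{O}_\ell=[C;CA;\dots;CA^{\ell-1}]$; $\mathcal{T}_\ell\in\mathbb{R}^{p\ell\times m\ell}$ block lower triangular with $(i,j)$ block equal to $CA^{i-j-1}B$ if $i>j$ and $0$ otherwise; $\mathcal{R}_\ell=[A^{\ell-1}B\ \cdots\ AB\ B]$; $\mathcal{O}_\ell^{L}$ a fixed left inverse of $\mathcal{O}_\ell$. $\mathbf{F}_\ell=\mathrm{blockdiag}(S_p,S_m)$ where $S_q\in\mathbb{R}^{q\ell\times q\ell}$ has blocks $I_q$ at block positions $(i,i+1)$, $i=1,\dots,\ell-1$, zeros elsewhere; $\mathbf{L}_\ell\in\mathbb{R}^{(p\ell+m\ell)\times p}$ has $I_p$ in rows $p\ell-p+1,\dots,p\ell$, zeros elsewhere; $\mathbf{B}_\ell\in\mathbb{R}^{(p\ell+m\ell)\times m}$ has $I_m$ in its last $m$ rows, zeros elsewhere. $Z_\ell=[CA^\ell\mathcal{O}_\ell^L\ \ C\mathcal{R}_\ell-CA^\ell\mathcal{O}_\ell^L\mathcal{T}_\ell]$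 and $\mathbf{A}_\ell=\mathbf{F}_\ell+\mathbf{L}_\ell Z_\ell$. *)

theory Defs
  imports "Jordan_Normal_Form.DL_Rank"
begin

text \<open>Matrices are Jordan_Normal_Form matrices (type real mat) with explicit dimensions.
  All block indices below are 0-based.\<close>

definition mrank :: "real mat \<Rightarrow> nat" where
  "mrank M = vec_space.rank (dim_row M) M"

definition obs_mat :: "real mat \<Rightarrow> real mat \<Rightarrow> nat \<Rightarrow> real mat" where
  "obs_mat A C l = mat (dim_row C * l) (dim_col A)
     (\<lambda>(i,j). (C * A ^\<^sub>m (i div dim_row C)) $$ (i mod dim_row C, j))"

definition reach_mat :: "real mat \<Rightarrow> real mat \<Rightarrow> nat \<Rightarrow> real mat" where
  "reach_mat A B l = mat (dim_row A) (dim_col B * l)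
     (\<lambda>(i,j). (A ^\<^sub>m (l - 1 - j div dim_col B) * B) $$ (i, j mod dim_col B))"

definition observable :: "real mat \<Rightarrow> real mat \<Rightarrow> bool" where
  "observable A C \<longleftrightarrow> mrank (obs_mat A C (dim_row A)) = dim_row A"

definition reachable :: "real mat \<Rightarrow> real mat \<Rightarrow> bool" where
  "reachable A B \<longleftrightarrow> mrank (reach_mat A B (dim_row A)) = dim_row A"

definition obs_index :: "real mat \<Rightarrow> real mat \<Rightarrow> nat" where
  "obs_index A C = (LEAST l. mrank (obs_mat A C l) = dim_row A)"

definition toep_mat :: "real mat \<Rightarrow> real mat \<Rightarrow> real mat \<Rightarrow> nat \<Rightarrow> real mat" where
  "toep_mat A B C l = mat (dim_row C * l) (dim_col B * l)
     (\<lambda>(i,j). if j div dim_col B < i div dim_row C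
              then (C * A ^\<^sub>m (i div dim_row C - j div dim_col B - 1) * B) $$ (i mod dim_row C, j mod dim_col B)
              else 0)"

definition shift_mat :: "nat \<Rightarrow> nat \<Rightarrow> real mat" where
  "shift_mat q l = mat (q * l) (q * l) (\<lambda>(i,j). if j = i + q then 1 else 0)"

definition F_mat :: "nat \<Rightarrow> nat \<Rightarrow> nat \<Rightarrow> real mat" where
  "F_mat p m l = four_block_mat (shift_mat p l) (0\<^sub>m (p*l) (m*l)) (0\<^sub>m (m*l) (p*l)) (shift_mat m l)"

definition L_mat :: "nat \<Rightarrow> nat \<Rightarrow> nat \<Rightarrow> real mat" where
  "L_mat p m l = mat (p*l + m*l) p (\<lambda>(i,j). if i = p*l - p + j then 1 else 0)"

definition B_mat :: "nat \<Rightarrow> nat \<Rightarrow> nat \<Rightarrow> real mat" where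
  "B_mat p m l = mat (p*l + m*l) m (\<lambda>(i,j). if i = p*l + m*l - m + j then 1 else 0)"

text \<open>Z_l = [C A^l OL,  C R_l - C A^l OL T_l], size p x (p l + m l), OL a left inverse of O_l.\<close>
definition Z_mat :: "real mat \<Rightarrow> real mat \<Rightarrow> real mat \<Rightarrow> real mat \<Rightarrow> nat \<Rightarrow> real mat" where
  "Z_mat A B C OL l =
     (let X = C * A ^\<^sub>m l * OL;
          Y = C * reach_mat A B l - C * A ^\<^sub>m l * OL * toep_mat A B C l;
          p = dim_row C; m = dim_col B
      in mat p (p*l + m*l) (\<lambda>(i,j). if j < p*l then X $$ (i,j) else Y $$ (i, j - p*l)))"

definition A_mat :: "real mat \<Rightarrow> real mat \<Rightarrow> real mat \<Rightarrow> real mat \<Rightarrow> nat \<Rightarrow> real mat" where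
  "A_mat A B C OL l = F_mat (dim_row C) (dim_col B) l + L_mat (dim_row C) (dim_col B) l * Z_mat A B C OL l"

end

theory Submission
  imports Defs
begin


lemma (in vec_space) rank_mono_cs:
  assumes M: "M \<in> carrier_mat n k1" and N: "N \<in> carrier_mat n k2"
    and sub: "col_space M \<subseteq> col_space N"
  shows "rank M \<le> rank N"
proof -
  let ?W = "span (set (cols N))" let ?X = "span (set (cols M))"
  have cN: "set (cols N) \<subseteq> carrier_vec n" using N cols_dim[of N] by auto
  have cM: "set (cols M) \<subseteq> carrier_vec n" using M cols_dim[of M] by auto
  have sW: "subspace class_ring ?W V" by (rule span_is_subspace[OF cN])
  have sX: "subspace class_ring ?X V" by (rule span_is_subspace[OF cM])
  have sXW: "subspace class_ring ?X (vs ?W)"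
    using nested_subspaces[OF sW sX] sub unfolding col_space_def by auto
  have vsW: "vectorspace class_ring (vs ?W)" using subspace_is_vs[OF sW] .
  have fW: "vectorspace.fin_dim class_ring (vs ?W)" using fin_dim_span_cols[OF N] .
  have fX: "vectorspace.fin_dim class_ring ((vs ?W)\<lparr>carrier := ?X\<rparr>)"
    using fin_dim_span_cols[OF M] by simp
  have "vectorspace.dim class_ring ((vs ?W)\<lparr>carrier := ?X\<rparr>) \<le> vectorspace.dim class_ring (vs ?W)"
    using vectorspace.subspace_dim[OF vsW sXW fW fX] .
  then show ?thesis unfolding rank_def by simp
qed

lemma (in vec_space) rank_le_nr:
  assumes M: "M \<in> carrier_mat n k"
  shows "rank M \<le> n"
proof -
  let ?X = "span (set (cols M))"
  have cM: "set (cols M) \<subseteq> carrier_vec n" using M cols_dim[of M] by auto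
  have sX: "subspace class_ring ?X V" by (rule span_is_subspace[OF cM])
  have "vectorspace.dim class_ring (vs ?X) \<le> dim"
    using subspace_dim[OF sX fin_dim fin_dim_span_cols[OF M]] .
  then show ?thesis unfolding rank_def dim_is_n by simp
qed

lemma (in vec_space) full_rank_cs:
  assumes M: "M \<in> carrier_mat n k" and r: "rank M = n"
  shows "col_space M = carrier_vec n"
proof -
  obtain S where S: "finite S" "maximal S (\<lambda>T. T \<subseteq> set (cols M) \<and> lin_indpt T)"
    using maximal_exists_superset[of "set (cols M)" "(\<lambda>T. T \<subseteq> set (cols M) \<and> lin_indpt T)" "{}"]
    by (auto simp: lin_dep_def)
  have c: "card S = n" using rank_card_indpt[OF M S(2)] r by simp
  have SM: "S \<subseteq> set (cols M)" "lin_indpt S" using S(2) unfolding maximal_def by auto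
  have cM: "set (cols M) \<subseteq> carrier_vec n" using M cols_dim[of M] by auto
  have "basis S" by (rule dim_li_is_basis[OF fin_dim S(1)]) (use SM cM c dim_is_n in auto)
  then have "span S = carrier V" unfolding basis_def by auto
  moreover have "span S \<subseteq> span (set (cols M))" using span_is_monotone[OF SM(1)] .
  moreover have "span (set (cols M)) \<subseteq> carrier V" using span_is_subset2[OF cM] by simp
  ultimately show ?thesis unfolding col_space_def by auto
qed

lemma (in vec_space) cs_full_rank:
  assumes M: "M \<in> carrier_mat n k" and cs: "col_space M = carrier_vec n"
  shows "rank M = n"
proof -
  have "span_vs (set (cols M)) = V" using cs unfolding col_space_def by simp
  then show ?thesis unfolding rank_def using dim_is_n by simp
qed




lemma sum_delta_nat: "(\<Sum>k\<in>{0..<(N::nat)}. (if k = a then 1 else 0) * (f k :: real)) = (if a < N then f a else 0)"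
proof -
  have "(\<Sum>k\<in>{0..<N}. (if k = a then 1 else 0) * (f k :: real)) = (\<Sum>k\<in>{0..<N}. if k = a then f k else 0)"
    by (rule sum.cong) auto
  also have "\<dots> = (if a \<in> {0..<N} then f a else 0)" by (rule sum.delta) (rule finite_atLeastLessThan)
  finally show ?thesis by simp
qed

lemma sum_delta_nat': "(\<Sum>k\<in>{0..<(N::nat)}. (f k :: real) * (if k = a then 1 else 0)) = (if a < N then f a else 0)"
  using sum_delta_nat[where N=N and a=a and f=f] by (simp add: mult.commute)

lemma shift_mult_left:
  assumes X: "X \<in> carrier_mat (q*l) c"
  shows "shift_mat q l * X = mat (q*l) c (\<lambda>(i,j). if i + q < q*l then X$$(i+q,j) else 0)"
proof (rule eq_matI)
  fix i j assume i: "i < dim_row (mat (q*l) c (\<lambda>(i,j). if i + q < q*l then X$$(i+q,j) else 0))"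
    and j: "j < dim_col (mat (q*l) c (\<lambda>(i,j). if i + q < q*l then X$$(i+q,j) else 0))"
  have "(shift_mat q l * X) $$ (i,j) = (\<Sum>k\<in>{0..<q*l}. (if k = i + q then 1 else 0) * X $$ (k,j))"
    using i j X by (auto simp: shift_mat_def scalar_prod_def intro!: sum.cong)
  also have "\<dots> = (if i + q < q*l then X$$(i+q,j) else 0)" by (rule sum_delta_nat)
  finally show "(shift_mat q l * X) $$ (i,j) = mat (q*l) c (\<lambda>(i,j). if i + q < q*l then X$$(i+q,j) else 0) $$ (i,j)"
    using i j by simp
qed (use X in \<open>auto simp: shift_mat_def\<close>)

lemma shift_mult_right:
  assumes X: "X \<in> carrier_mat r (q*l)"
  shows "X * shift_mat q l = mat r (q*l) (\<lambda>(i,j). if q \<le> j then X$$(i,j-q) else 0)"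
proof (rule eq_matI)
  fix i j assume i: "i < dim_row (mat r (q*l) (\<lambda>(i,j). if q \<le> j then X$$(i,j-q) else 0))"
    and j: "j < dim_col (mat r (q*l) (\<lambda>(i,j). if q \<le> j then X$$(i,j-q) else 0))"
  have "(X * shift_mat q l) $$ (i,j) = (\<Sum>k\<in>{0..<q*l}. X $$ (i,k) * (if k = j - q \<and> q \<le> j then 1 else 0))"
    using i j X by (auto simp: shift_mat_def scalar_prod_def intro!: sum.cong)
  also have "\<dots> = (if q \<le> j then X$$(i,j-q) else 0)"
    using j by (cases "q \<le> j") (auto simp: sum_delta_nat')
  finally show "(X * shift_mat q l) $$ (i,j) = mat r (q*l) (\<lambda>(i,j). if q \<le> j then X$$(i,j-q) else 0) $$ (i,j)"
    using i j by simp
qed (use X in \<open>auto simp: shift_mat_def\<close>)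

lemma L_mult:
  assumes W: "W \<in> carrier_mat p c"
  shows "L_mat p m l * W = mat (p*l + m*l) c (\<lambda>(i,j). if p*l - p \<le> i \<and> i - (p*l - p) < p then W$$(i - (p*l-p), j) else 0)"
proof (rule eq_matI)
  let ?R = "mat (p*l + m*l) c (\<lambda>(i,j). if p*l - p \<le> i \<and> i - (p*l - p) < p then W$$(i - (p*l-p), j) else 0)"
  fix i j assume i: "i < dim_row ?R" and j: "j < dim_col ?R"
  have "(L_mat p m l * W) $$ (i,j) = (\<Sum>k\<in>{0..<p}. (if k = i - (p*l-p) \<and> p*l - p \<le> i then 1 else 0) * W $$ (k,j))"
    using i j W by (auto simp: L_mat_def scalar_prod_def intro!: sum.cong)
  also have "\<dots> = ?R $$ (i,j)"
    using i j by (cases "p*l - p \<le> i") (auto simp: sum_delta_nat)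
  finally show "(L_mat p m l * W) $$ (i,j) = ?R $$ (i,j)" .
qed (use W in \<open>auto simp: L_mat_def\<close>)




lemma blk_facts:
  fixes i p l :: nat assumes i: "i < p*l"
  shows "(i + p < p*l) = (Suc (i div p) < l)"
    and "(p*l - p \<le> i \<and> i - (p*l - p) < p) = (Suc (i div p) = l)"
    and "Suc (i div p) = l \<Longrightarrow> i - (p*l-p) = i mod p"
    and "(i+p) div p = Suc (i div p)" and "(i+p) mod p = i mod p"
    and "i div p < l" and "i mod p < p"
proof -
  have p: "0 < p" using i by (cases p) auto
  have idl: "i div p < l" using i p by (simp add: div_less_iff_less_mult mult.commute)
  show "i div p < l" by fact
  show "i mod p < p" using p by simp
  show ip: "(i+p) div p = Suc (i div p)" using div_add_self2[of p i] p by simp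
  show "(i+p) mod p = i mod p" by simp
  show "(i + p < p*l) = (Suc (i div p) < l)"
    using p ip div_less_iff_less_mult[OF p, of "i+p" l] by (simp add: mult.commute)
  have dm: "i = (i div p) * p + i mod p" by simp
  have e: "p*l - p = (l - 1) * p" using diff_mult_distrib[of l 1 p] by (simp add: mult.commute)
  show "Suc (i div p) = l \<Longrightarrow> i - (p*l-p) = i mod p"
  proof -
    assume "Suc (i div p) = l"
    then have "l - 1 = i div p" by simp
    then show ?thesis using e dm by (metis add_diff_cancel_left')
  qed
  show "(p*l - p \<le> i \<and> i - (p*l - p) < p) = (Suc (i div p) = l)"
  proof
    assume h: "p*l - p \<le> i \<and> i - (p*l - p) < p"
    then have "(l-1) * p \<le> i" using e by simp
    then have "l - 1 \<le> i div p" using p by (simp add: less_eq_div_iff_mult_less_eq)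
    then show "Suc (i div p) = l" using idl by linarith
  next
    assume h: "Suc (i div p) = l"
    then have "l - 1 = i div p" by simp
    then have "p*l - p = (i div p) * p" using e by simp
    then show "p*l - p \<le> i \<and> i - (p*l - p) < p" using dm p
      by (metis add_diff_cancel_left' le_add1 mod_less_divisor)
  qed
qed




locale lsys =
  fixes A B C OL :: "real mat" and n m p l :: nat
  assumes A: "A \<in> carrier_mat n n" and B: "B \<in> carrier_mat n m" and C: "C \<in> carrier_mat p n"
    and OL: "OL \<in> carrier_mat n (p*l)" and inv: "OL * obs_mat A C l = 1\<^sub>m n"
    and l1: "1 \<le> l" and m1: "1 \<le> m"
begin

abbreviation "Ob \<equiv> obs_mat A C l"
abbreviation "T \<equiv> toep_mat A B C l"
abbreviation "R \<equiv> reach_mat A B l"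

lemma dims[simp]: "dim_row A = n" "dim_col A = n" "dim_row B = n" "dim_col B = m"
  "dim_row C = p" "dim_col C = n" "dim_row OL = n" "dim_col OL = p*l"
  using A B C OL by auto

declare pow_mat_dim[simp del]
lemmas carr[simp] = A B C OL

lemma Apow_dims[simp]: "dim_row (A ^\<^sub>m k) = n" "dim_col (A ^\<^sub>m k) = n"
  using A by auto

lemma Ob_carrier[simp]: "Ob \<in> carrier_mat (p*l) n" by (simp add: obs_mat_def)
lemma T_carrier[simp]: "T \<in> carrier_mat (p*l) (m*l)" by (simp add: toep_mat_def)
lemma R_carrier[simp]: "R \<in> carrier_mat n (m*l)" by (simp add: reach_mat_def)

lemma OTR_dims[simp]: "dim_row Ob = p*l" "dim_col Ob = n" "dim_row T = p*l" "dim_col T = m*l"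
  "dim_row R = n" "dim_col R = m*l"
  by (simp_all add: obs_mat_def toep_mat_def reach_mat_def)

lemma Ob_index: "i < p*l \<Longrightarrow> j < n \<Longrightarrow> Ob $$ (i,j) = (C * A ^\<^sub>m (i div p)) $$ (i mod p, j)"
  by (simp add: obs_mat_def)

lemma T_index: "i < p*l \<Longrightarrow> j < m*l \<Longrightarrow> T $$ (i,j) = (if j div m < i div p
              then (C * A ^\<^sub>m (i div p - j div m - 1) * B) $$ (i mod p, j mod m) else 0)"
  by (simp add: toep_mat_def)

lemma CAk_carrier[simp]: "C * A ^\<^sub>m k \<in> carrier_mat p n" using A C by auto

lemma Ob_mult:
  assumes X: "X \<in> carrier_mat n c"
  shows "Ob * X = mat (p*l) c (\<lambda>(i,j). (C * A ^\<^sub>m (i div p) * X) $$ (i mod p, j))"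
proof (rule eq_matI)
  fix i j assume i: "i < dim_row (mat (p*l) c (\<lambda>(i,j). (C * A ^\<^sub>m (i div p) * X) $$ (i mod p, j)))"
    and j: "j < dim_col (mat (p*l) c (\<lambda>(i,j). (C * A ^\<^sub>m (i div p) * X) $$ (i mod p, j)))"
  have ip: "i mod p < p" using i by (cases "p = 0") auto
  have "row Ob i = row (C * A ^\<^sub>m (i div p)) (i mod p)"
  proof (rule eq_vecI)
    fix k assume "k < dim_vec (row (C * A ^\<^sub>m (i div p)) (i mod p))"
    then have k: "k < n" using A by (simp split: if_splits)
    show "row Ob i $ k = row (C * A ^\<^sub>m (i div p)) (i mod p) $ k"
      using i ip k by (simp add: obs_mat_def row_def)
  qed (simp add: obs_mat_def)
  then show "(Ob * X) $$ (i,j) = mat (p*l) c (\<lambda>(i,j). (C * A ^\<^sub>m (i div p) * X) $$ (i mod p, j)) $$ (i,j)"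
    using i j ip X by simp
qed (use X in auto)

definition "BE = mat n (m*l) (\<lambda>(i,j). if j < m then B $$ (i,j) else 0)"
definition "Phi = four_block_mat Ob T (0\<^sub>m (m*l) n) (1\<^sub>m (m*l))"
definition "Mm = four_block_mat A BE (0\<^sub>m (m*l) n) (shift_mat m l)"
definition "Xm = C * A ^\<^sub>m l * OL"
definition "Ym = C * R - Xm * T"

lemma BE_carrier[simp]: "BE \<in> carrier_mat n (m*l)" by (simp add: BE_def)
lemma shift_carrier[simp]: "shift_mat q l \<in> carrier_mat (q*l) (q*l)" by (simp add: shift_mat_def)
lemma BE_dims[simp]: "dim_row BE = n" "dim_col BE = m*l" by (simp_all add: BE_def)
lemma shift_dims[simp]: "dim_row (shift_mat q l) = q*l" "dim_col (shift_mat q l) = q*l" by (simp_all add: shift_mat_def)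
lemma Phi_carrier[simp]: "Phi \<in> carrier_mat (p*l + m*l) (n + m*l)" by (simp add: Phi_def)
lemma Mm_carrier[simp]: "Mm \<in> carrier_mat (n + m*l) (n + m*l)" by (simp add: Mm_def)
lemma Xm_carrier[simp]: "Xm \<in> carrier_mat p (p*l)" by (rule carrier_matI) (simp_all add: Xm_def)
lemma Ym_carrier[simp]: "Ym \<in> carrier_mat p (m*l)" by (rule carrier_matI) (simp_all add: Ym_def Xm_def)
lemma XY_dims[simp]: "dim_row Xm = p" "dim_col Xm = p*l" "dim_row Ym = p" "dim_col Ym = m*l"
  using carrier_matD[OF Xm_carrier] carrier_matD[OF Ym_carrier] by auto
lemma Al_carrier[simp]: "A_mat A B C OL l \<in> carrier_mat (p*l + m*l) (p*l + m*l)"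
  by (rule carrier_matI) (simp_all add: A_mat_def F_mat_def L_mat_def Z_mat_def Let_def)

lemma BE_mult:
  assumes Y: "Y \<in> carrier_mat r n"
  shows "Y * BE = mat r (m*l) (\<lambda>(a,j). if j < m then (Y*B)$$(a,j) else 0)"
proof (rule eq_matI)
  fix i j assume i: "i < dim_row (mat r (m*l) (\<lambda>(a,j). if j < m then (Y*B)$$(a,j) else 0))"
    and j: "j < dim_col (mat r (m*l) (\<lambda>(a,j). if j < m then (Y*B)$$(a,j) else 0))"
  have "col BE j = (if j < m then col B j else 0\<^sub>v n)"
    using j by (intro eq_vecI) (auto simp: BE_def)
  then show "(Y * BE) $$ (i,j) = mat r (m*l) (\<lambda>(a,j). if j < m then (Y*B)$$(a,j) else 0) $$ (i,j)"
    using i j Y by auto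
qed (use Y in \<open>auto simp: BE_def\<close>)

lemma CR_index:
  assumes a: "a < p" and j: "j < m*l"
  shows "(C * R) $$ (a,j) = (C * (A ^\<^sub>m (l - 1 - j div m) * B)) $$ (a, j mod m)"
proof -
  have jm: "j mod m < m" using m1 by simp
  have "col R j = col (A ^\<^sub>m (l - 1 - j div m) * B) (j mod m)"
    using j jm by (intro eq_vecI) (auto simp: reach_mat_def)
  then show ?thesis using a j jm by simp
qed

lemma Z_four: "Z_mat A B C OL l = four_block_mat Xm Ym (0\<^sub>m 0 (p*l)) (0\<^sub>m 0 (m*l))"
  by (rule eq_matI) (auto simp: Z_mat_def Let_def Xm_def[symmetric] Ym_def[symmetric])

lemma XOb: "Xm * Ob = C * A ^\<^sub>m l"
proof -
  have "Xm * Ob = (C * A ^\<^sub>m l) * (OL * Ob)" unfolding Xm_def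
    using assoc_mult_mat[OF CAk_carrier[of l] OL Ob_carrier] by simp
  also have "\<dots> = C * A ^\<^sub>m l" using inv by simp
  finally show ?thesis .
qed


lemma XTY: "Xm * T + Ym = C * R"
  unfolding Ym_def by (rule eq_matI) (simp_all del: index_mult_mat(1))

lemma ZPhi: "Z_mat A B C OL l * Phi = mat p (n + m*l) (\<lambda>(a,j). if j < n then (C * A ^\<^sub>m l) $$ (a,j) else (C * R) $$ (a, j - n))"
proof -
  have "Z_mat A B C OL l * Phi = four_block_mat (Xm * Ob + Ym * 0\<^sub>m (m*l) n) (Xm * T + Ym * 1\<^sub>m (m*l))
     (0\<^sub>m 0 (p*l) * Ob + 0\<^sub>m 0 (m*l) * 0\<^sub>m (m*l) n) (0\<^sub>m 0 (p*l) * T + 0\<^sub>m 0 (m*l) * 1\<^sub>m (m*l))"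
    unfolding Z_four Phi_def by (rule mult_four_block_mat[OF Xm_carrier Ym_carrier zero_carrier_mat zero_carrier_mat Ob_carrier T_carrier zero_carrier_mat one_carrier_mat])
  also have "\<dots> = four_block_mat (C * A ^\<^sub>m l) (C * R) (0\<^sub>m 0 n) (0\<^sub>m 0 (m*l))"
  proof (rule cong_four_block_mat)
    show "Xm * Ob + Ym * 0\<^sub>m (m * l) n = C * A ^\<^sub>m l" using XOb by simp
    show "Xm * T + Ym * 1\<^sub>m (m * l) = C * R" using XTY by simp
  qed (auto intro!: eq_matI)
  also have "\<dots> = mat p (n + m*l) (\<lambda>(a,j). if j < n then (C * A ^\<^sub>m l) $$ (a,j) else (C * R) $$ (a, j - n))"
    by (rule eq_matI) (simp_all del: index_mult_mat(1))
  finally show ?thesis .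
qed

lemma prod_carriers[simp]: "shift_mat p l * Ob \<in> carrier_mat (p*l) n" "shift_mat p l * T \<in> carrier_mat (p*l) (m*l)"
  "Ob * A \<in> carrier_mat (p*l) n" "Ob * BE \<in> carrier_mat (p*l) (m*l)" "T * shift_mat m l \<in> carrier_mat (p*l) (m*l)"
  "shift_mat m l * 1\<^sub>m (m*l) = shift_mat m l" "1\<^sub>m (m*l) * shift_mat m l = shift_mat m l"
  using mult_carrier_mat[OF shift_carrier Ob_carrier] mult_carrier_mat[OF shift_carrier T_carrier]
    mult_carrier_mat[OF Ob_carrier A] mult_carrier_mat[OF Ob_carrier BE_carrier]
    mult_carrier_mat[OF T_carrier shift_carrier] right_mult_one_mat[OF shift_carrier] left_mult_one_mat[OF shift_carrier]
  by auto

lemma FPhi: "F_mat p m l * Phi = four_block_mat (shift_mat p l * Ob) (shift_mat p l * T) (0\<^sub>m (m*l) n) (shift_mat m l)"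
proof -
  have "F_mat p m l * Phi = four_block_mat (shift_mat p l * Ob + 0\<^sub>m (p*l) (m*l) * 0\<^sub>m (m*l) n)
     (shift_mat p l * T + 0\<^sub>m (p*l) (m*l) * 1\<^sub>m (m*l))
     (0\<^sub>m (m*l) (p*l) * Ob + shift_mat m l * 0\<^sub>m (m*l) n) (0\<^sub>m (m*l) (p*l) * T + shift_mat m l * 1\<^sub>m (m*l))"
    unfolding F_mat_def Phi_def by (rule mult_four_block_mat[OF shift_carrier zero_carrier_mat zero_carrier_mat shift_carrier Ob_carrier T_carrier zero_carrier_mat one_carrier_mat])
  also have "\<dots> = four_block_mat (shift_mat p l * Ob) (shift_mat p l * T) (0\<^sub>m (m*l) n) (shift_mat m l)"
  proof (rule cong_four_block_mat)
    show "shift_mat p l * Ob + 0\<^sub>m (p * l) (m * l) * 0\<^sub>m (m * l) n = shift_mat p l * Ob"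
      by simp
    show "shift_mat p l * T + 0\<^sub>m (p * l) (m * l) * 1\<^sub>m (m * l) = shift_mat p l * T"
      by simp
    show "0\<^sub>m (m * l) (p * l) * Ob + shift_mat m l * 0\<^sub>m (m * l) n = 0\<^sub>m (m * l) n"
      by simp
    show "0\<^sub>m (m * l) (p * l) * T + shift_mat m l * 1\<^sub>m (m * l) = shift_mat m l"
      by simp
  qed
  finally show ?thesis .
qed

lemma PhiM: "Phi * Mm = four_block_mat (Ob * A) (Ob * BE + T * shift_mat m l) (0\<^sub>m (m*l) n) (shift_mat m l)"
proof -
  have "Phi * Mm = four_block_mat (Ob * A + T * 0\<^sub>m (m*l) n) (Ob * BE + T * shift_mat m l)
     (0\<^sub>m (m*l) n * A + 1\<^sub>m (m*l) * 0\<^sub>m (m*l) n) (0\<^sub>m (m*l) n * BE + 1\<^sub>m (m*l) * shift_mat m l)"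
    unfolding Mm_def Phi_def by (rule mult_four_block_mat[OF Ob_carrier T_carrier zero_carrier_mat one_carrier_mat A BE_carrier zero_carrier_mat shift_carrier])
  also have "\<dots> = four_block_mat (Ob * A) (Ob * BE + T * shift_mat m l) (0\<^sub>m (m*l) n) (shift_mat m l)"
  proof (rule cong_four_block_mat)
    show "Ob * A + T * 0\<^sub>m (m * l) n = Ob * A" by simp
    show "0\<^sub>m (m * l) n * A + 1\<^sub>m (m * l) * 0\<^sub>m (m * l) n = 0\<^sub>m (m * l) n" by simp
    show "0\<^sub>m (m * l) n * BE + 1\<^sub>m (m * l) * shift_mat m l = shift_mat m l"
      by simp
  qed simp
  finally show ?thesis .
qed

lemma AlPhi_split: "A_mat A B C OL l * Phi = F_mat p m l * Phi + L_mat p m l * (Z_mat A B C OL l * Phi)"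
proof -
  have F: "F_mat p m l \<in> carrier_mat (p*l+m*l) (p*l+m*l)" by (simp add: F_mat_def)
  have L: "L_mat p m l \<in> carrier_mat (p*l+m*l) p" by (simp add: L_mat_def)
  have Z: "Z_mat A B C OL l \<in> carrier_mat p (p*l+m*l)" by (simp add: Z_mat_def Let_def)
  show ?thesis unfolding A_mat_def dims
    by (simp add: add_mult_distrib_mat[OF F mult_carrier_mat[OF L Z] Phi_carrier] assoc_mult_mat[OF L Z Phi_carrier])
qed

end



context lsys begin

lemma CApow_Suc: "C * A ^\<^sub>m k * A = C * A ^\<^sub>m (Suc k)"
  using assoc_mult_mat[OF C pow_carrier_mat[OF A, of k] A] by simp

lemma CApowB: "C * (A ^\<^sub>m k * B) = C * A ^\<^sub>m k * B"
  using assoc_mult_mat[OF C pow_carrier_mat[OF A, of k] B] by simp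

lemma AlPhi_eq: "A_mat A B C OL l * Phi = Phi * Mm"
proof -
  let ?W = "Z_mat A B C OL l * Phi"
  let ?L = "L_mat p m l"
  have W: "?W \<in> carrier_mat p (n+m*l)" unfolding ZPhi by simp
  have LHS: "A_mat A B C OL l * Phi = four_block_mat (shift_mat p l * Ob) (shift_mat p l * T) (0\<^sub>m (m*l) n) (shift_mat m l) + ?L * ?W"
    using AlPhi_split FPhi by simp
  have LWc: "?L * ?W \<in> carrier_mat (p*l+m*l) (n+m*l)" using W unfolding L_mult[OF W] by simp
  have LW: "(?L * ?W) $$ (i,j) = (if p*l - p \<le> i \<and> i - (p*l - p) < p then
     (if j < n then (C * A ^\<^sub>m l) $$ (i - (p*l-p), j) else (C * R) $$ (i - (p*l-p), j - n)) else 0)"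
    if "i < p*l+m*l" "j < n+m*l" for i j
    using that unfolding L_mult[OF W] by (simp add: ZPhi)
  show ?thesis unfolding LHS PhiM
  proof (rule eq_matI)
    fix i j assume "i < dim_row (four_block_mat (Ob * A) (Ob * BE + T * shift_mat m l) (0\<^sub>m (m * l) n) (shift_mat m l))"
      "j < dim_col (four_block_mat (Ob * A) (Ob * BE + T * shift_mat m l) (0\<^sub>m (m * l) n) (shift_mat m l))"
    then have i: "i < p*l+m*l" and j: "j < n+m*l" by auto
    have addi: "(four_block_mat (shift_mat p l * Ob) (shift_mat p l * T) (0\<^sub>m (m*l) n) (shift_mat m l) + ?L * ?W) $$ (i,j)
      = four_block_mat (shift_mat p l * Ob) (shift_mat p l * T) (0\<^sub>m (m*l) n) (shift_mat m l) $$ (i,j) + (?L * ?W) $$ (i,j)"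
      by (rule index_add_mat(1)) (use i j LWc in auto)
    show "(four_block_mat (shift_mat p l * Ob) (shift_mat p l * T) (0\<^sub>m (m*l) n) (shift_mat m l) + ?L * ?W) $$ (i,j)
      = four_block_mat (Ob * A) (Ob * BE + T * shift_mat m l) (0\<^sub>m (m * l) n) (shift_mat m l) $$ (i,j)"
    proof (cases "i < p*l")
      case iT: True
      note bf = blk_facts[OF iT]
      show ?thesis
      proof (cases "j < n")
        case jT: True
        have 1: "(shift_mat p l * Ob) $$ (i,j) = (if Suc (i div p) < l then (C * A ^\<^sub>m (Suc (i div p))) $$ (i mod p, j) else 0)"
          using iT jT bf unfolding shift_mult_left[OF Ob_carrier] by (simp add: Ob_index del: index_mult_mat(1))
        have 2: "(?L * ?W) $$ (i,j) = (if Suc (i div p) = l then (C * A ^\<^sub>m l) $$ (i mod p, j) else 0)"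
          using LW[OF i j] iT jT bf by (simp del: index_mult_mat(1))
        have 3: "(Ob * A) $$ (i,j) = (C * A ^\<^sub>m (Suc (i div p))) $$ (i mod p, j)"
          using iT jT unfolding Ob_mult[OF A] CApow_Suc by (simp del: index_mult_mat(1))
        show ?thesis unfolding addi using iT jT 1 2 3 bf
          by (auto simp del: index_mult_mat(1))
      next
        case jF: False
        define j' where "j' = j - n"
        have j': "j' < m*l" using j jF j'_def by simp
        define c where "c = j' div m"
        define d where "d = j' mod m"
        have dm: "d < m" using m1 d_def by simp
        have cl: "c < l" using j' c_def div_less_iff_less_mult[of m j' l] m1 by (simp add: mult.commute)
        have c0: "(j' < m) = (c = 0)" using c_def m1 div_less_iff_less_mult[of m j' 1] by auto
        have jm1: "m \<le> j' \<Longrightarrow> (j' - m) div m = c - 1 \<and> (j' - m) mod m = d"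
        proof -
          assume "m \<le> j'"
          then have c1: "1 \<le> c" using c0 by auto
          have "j' = c * m + d" using c_def d_def by simp
          then have e: "j' - m = (c - 1) * m + d" using c1 by (simp add: diff_mult_distrib)
          show ?thesis unfolding e using dm by simp
        qed
        have 1: "(shift_mat p l * T) $$ (i,j') = (if Suc (i div p) < l then
             (if c < Suc (i div p) then (C * A ^\<^sub>m (i div p - c) * B) $$ (i mod p, d) else 0) else 0)"
          using iT j' bf unfolding shift_mult_left[OF T_carrier]
          by (simp add: T_index c_def d_def del: index_mult_mat(1))
        have 2: "(?L * ?W) $$ (i,j) = (if Suc (i div p) = l then (C * A ^\<^sub>m (l - 1 - c) * B) $$ (i mod p, d) else 0)"
          using LW[OF i j] iT jF bf j' dm
          by (simp add: CR_index c_def d_def j'_def CApowB del: index_mult_mat(1))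
        have 3: "(Ob * BE) $$ (i,j') = (if c = 0 then (C * A ^\<^sub>m (i div p) * B) $$ (i mod p, d) else 0)"
          using iT j' c0 bf unfolding Ob_mult[OF BE_carrier]
          by (simp add: BE_mult[OF CAk_carrier] d_def del: index_mult_mat(1))
        have 4: "(T * shift_mat m l) $$ (i,j') = (if c = 0 then 0 else
             (if c - 1 < i div p then (C * A ^\<^sub>m (i div p - (c - 1) - 1) * B) $$ (i mod p, d) else 0))"
          using iT j' c0 jm1 unfolding shift_mult_right[OF T_carrier]
          by (auto simp add: T_index del: index_mult_mat(1))
        have lhs: "four_block_mat (shift_mat p l * Ob) (shift_mat p l * T) (0\<^sub>m (m*l) n) (shift_mat m l) $$ (i,j)
           = (shift_mat p l * T) $$ (i,j')" using iT jF j j'_def by simp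
        have rhs: "four_block_mat (Ob * A) (Ob * BE + T * shift_mat m l) (0\<^sub>m (m * l) n) (shift_mat m l) $$ (i,j)
           = (Ob * BE) $$ (i,j') + (T * shift_mat m l) $$ (i,j')" using iT jF j j'_def j' by simp
        have ar: "Suc (i div p) = l \<Longrightarrow> c \<noteq> 0 \<Longrightarrow> i div p - (c - 1) - 1 = l - 1 - c" by simp
        have ar2: "c \<noteq> 0 \<Longrightarrow> i div p - (c - 1) - 1 = i div p - c" by simp
        show ?thesis unfolding addi lhs rhs 1 2 3 4 using cl ar ar2 bf
          by (auto simp del: index_mult_mat(1))
      qed
    next
      case iF: False
      have nl: "\<not> (p*l - p \<le> i \<and> i - (p*l - p) < p)" using iF l1 by auto
      show ?thesis unfolding addi using LW[OF i j] nl iF i j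
        by (simp del: index_mult_mat(1))
    qed
  qed (auto simp: L_mat_def Phi_def)
qed

end



context lsys begin

definition "Bp = mat (n + m*l) m (\<lambda>(i,j). if i = n + m*l - m + j then 1 else 0)"
definition "Emat b = mat (m*l) m (\<lambda>(i,r). if i = b*m + r then 1 else (0::real))"
definition "Vtop j = (if j < l then 0\<^sub>m n m else A ^\<^sub>m (j - l) * B)"
definition "Vbot j = (if j < l then Emat (l - 1 - j) else 0\<^sub>m (m*l) m)"
definition "V j = four_block_mat (Vtop j) (0\<^sub>m n 0) (Vbot j) (0\<^sub>m (m*l) 0)"

lemma ApowB_carrier[simp]: "A ^\<^sub>m k * B \<in> carrier_mat n m"
  using mult_carrier_mat[OF pow_carrier_mat[OF A] B] by simp

lemma Bp_carrier[simp]: "Bp \<in> carrier_mat (n + m*l) m" by (simp add: Bp_def)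
lemma Emat_carrier[simp]: "Emat b \<in> carrier_mat (m*l) m" by (simp add: Emat_def)
lemma Vtop_carrier[simp]: "Vtop j \<in> carrier_mat n m" by (simp add: Vtop_def)
lemma Vbot_carrier[simp]: "Vbot j \<in> carrier_mat (m*l) m" by (simp add: Vbot_def)
lemma V_carrier[simp]: "V j \<in> carrier_mat (n + m*l) m"
  unfolding V_def using four_block_carrier_mat[OF Vtop_carrier[of j] zero_carrier_mat[of "m*l" 0]] by simp
lemma more_dims[simp]: "dim_row Bp = n + m*l" "dim_col Bp = m" "dim_row (Emat b) = m*l" "dim_col (Emat b) = m"
  "dim_row (Vtop j) = n" "dim_col (Vtop j) = m" "dim_row (Vbot j) = m*l" "dim_col (Vbot j) = m"
  "dim_row (V j) = n + m*l" "dim_col (V j) = m" "dim_row Phi = p*l+m*l" "dim_col Phi = n + m*l"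
  "dim_row Mm = n+m*l" "dim_col Mm = n + m*l"
  using carrier_matD[OF Bp_carrier] carrier_matD[OF Emat_carrier] carrier_matD[OF Vtop_carrier]
    carrier_matD[OF Vbot_carrier] carrier_matD[OF V_carrier] carrier_matD[OF Phi_carrier] carrier_matD[OF Mm_carrier]
  by auto
lemma Al_dims[simp]: "dim_row (A_mat A B C OL l) = p*l + m*l" "dim_col (A_mat A B C OL l) = p*l + m*l"
  using carrier_matD[OF Al_carrier] by auto
lemma Bl_carrier[simp]: "B_mat p m l \<in> carrier_mat (p*l + m*l) m" by (simp add: B_mat_def)

lemma Bl_eq: "B_mat p m l = Phi * Bp"
proof (rule eq_matI)
  fix i j assume "i < dim_row (Phi * Bp)" "j < dim_col (Phi * Bp)"
  then have i: "i < p*l + m*l" and j: "j < m" by (auto simp: Phi_def)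
  have s1: "(Phi * Bp) $$ (i,j) = (\<Sum>t\<in>{0..<n+m*l}. Phi $$ (i,t) * (if t = n + m*l - m + j then 1 else 0))"
    using i j by (auto simp: scalar_prod_def Bp_def Phi_def intro!: sum.cong)
  have ml: "m \<le> m*l" using l1 by simp
  have lt: "n + m * l - m + j < n + m*l" using j ml by linarith
  have s2: "(\<Sum>t\<in>{0..<n+m*l}. Phi $$ (i,t) * (if t = n + m*l - m + j then 1 else 0)) = Phi $$ (i, n + m*l - m + j)"
    using lt by (subst sum_delta_nat') simp
  have s3: "Phi $$ (i, n + m*l - m + j) = (B_mat p m l) $$ (i,j)"
  proof (cases "i < p*l")
    case True
    have e: "m*l - m + j = (l-1)*m + j" using diff_mult_distrib[of l 1 m] by (simp add: mult.commute)
    have "(m*l - m + j) div m = l - 1" unfolding e using j by simp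
    moreover have "i div p < l" using blk_facts(6)[OF True] .
    moreover have "n + m * l - m + j - n = m*l - m + j" using ml by linarith
    ultimately have dv: "(m*l - m + j) div m = l - 1" "i div p < l" "n + m * l - m + j - n = m*l - m + j" by auto
    have j2: "m*l - m + j < m*l" using j ml by linarith
    have "Phi $$ (i, n + m*l - m + j) = T $$ (i, m*l - m + j)"
    proof -
      have "\<not> n + m * l - m + j < n" using ml by linarith
      then show ?thesis using True lt dv(3) by (simp add: Phi_def)
    qed
    also have "\<dots> = 0" using T_index[OF True j2] dv(1,2) by simp
    also have "0 = B_mat p m l $$ (i,j)"
    proof -
      have "i \<noteq> p*l + m*l - m + j" using True ml by linarith
      then show ?thesis using True j i by (simp add: B_mat_def)
    qed
    finally show ?thesis .
  next
    case False
    have nX: "\<not> n + m * l - m + j < n" using ml by linarith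
    have i2: "i - p*l < m*l" using i False by linarith
    have X2: "n + m * l - m + j - n < m*l" using lt ml by linarith
    have "Phi $$ (i, n + m*l - m + j) = 1\<^sub>m (m*l) $$ (i - p*l, n + m * l - m + j - n)"
      using False i lt nX by (simp add: Phi_def)
    also have "\<dots> = (if i - p*l = n + m * l - m + j - n then 1 else 0)" using i2 X2 by simp
    also have "\<dots> = (if i = p*l + m*l - m + j then 1 else 0)"
    proof -
      have "(i - p*l = n + m * l - m + j - n) = (i = p*l + m*l - m + j)" using False ml by linarith
      then show ?thesis by simp
    qed
    also have "\<dots> = B_mat p m l $$ (i,j)" using i j by (simp add: B_mat_def)
    finally show ?thesis .
  qed
  show "B_mat p m l $$ (i,j) = (Phi * Bp) $$ (i,j)" using s1 s2 s3 by simp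
qed (auto simp: Phi_def B_mat_def)

end



lemma pow_comm: assumes X: "(X :: real mat) \<in> carrier_mat k k" shows "X ^\<^sub>m i * X = X * X ^\<^sub>m i"
proof (induction i)
  case 0 then show ?case using X by simp
next
  case (Suc i)
  have "X ^\<^sub>m Suc i * X = (X ^\<^sub>m i * X) * X" by simp
  also have "\<dots> = (X * X ^\<^sub>m i) * X" using Suc by simp
  also have "\<dots> = X * (X ^\<^sub>m i * X)" using assoc_mult_mat[OF X pow_carrier_mat[OF X] X] by simp
  finally show ?case by simp
qed

context lsys begin

abbreviation "Al \<equiv> A_mat A B C OL l"

lemma pow_dims[simp]: "dim_row (Mm ^\<^sub>m k) = n + m*l" "dim_col (Mm ^\<^sub>m k) = n + m*l"
  "dim_row (Al ^\<^sub>m k) = p*l + m*l" "dim_col (Al ^\<^sub>m k) = p*l + m*l"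
  using carrier_matD[OF pow_carrier_mat[OF Mm_carrier, of k]] carrier_matD[OF pow_carrier_mat[OF Al_carrier, of k]]
  by auto

lemma Bl_dims[simp]: "dim_row (B_mat p m l) = p*l+m*l" "dim_col (B_mat p m l) = m"
  by (simp_all add: B_mat_def)

lemma Al_pow_Phi: "Al ^\<^sub>m k * Phi = Phi * Mm ^\<^sub>m k"
proof (induction k)
  case 0 then show ?case by simp
next
  case (Suc k)
  have "Al ^\<^sub>m Suc k * Phi = Al ^\<^sub>m k * (Al * Phi)"
    using assoc_mult_mat[OF pow_carrier_mat[OF Al_carrier] Al_carrier Phi_carrier] by simp
  also have "\<dots> = (Al ^\<^sub>m k * Phi) * Mm"
    unfolding AlPhi_eq using assoc_mult_mat[OF pow_carrier_mat[OF Al_carrier] Phi_carrier Mm_carrier] by simp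
  also have "\<dots> = Phi * Mm ^\<^sub>m Suc k"
    unfolding Suc using assoc_mult_mat[OF Phi_carrier pow_carrier_mat[OF Mm_carrier] Mm_carrier] by simp
  finally show ?case .
qed

lemma reach_eq: "reach_mat Al (B_mat p m l) N = Phi * reach_mat Mm Bp N"
proof (rule eq_matI)
  fix i j assume "i < dim_row (Phi * reach_mat Mm Bp N)" "j < dim_col (Phi * reach_mat Mm Bp N)"
  then have i: "i < p*l+m*l" and j: "j < m*N" by (auto simp: reach_mat_def)
  let ?k = "N - 1 - j div m"
  have jm: "j mod m < m" using m1 by simp
  have cl: "col (reach_mat Mm Bp N) j = col (Mm ^\<^sub>m ?k * Bp) (j mod m)"
    using j jm by (intro eq_vecI) (auto simp: reach_mat_def)
  have "reach_mat Al (B_mat p m l) N $$ (i,j) = (Al ^\<^sub>m ?k * (Phi * Bp)) $$ (i, j mod m)"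
    using i j by (simp add: reach_mat_def Bl_eq[symmetric] del: index_mult_mat(1))
  also have "Al ^\<^sub>m ?k * (Phi * Bp) = Phi * (Mm ^\<^sub>m ?k * Bp)"
    using assoc_mult_mat[OF pow_carrier_mat[OF Al_carrier] Phi_carrier Bp_carrier, of ?k, symmetric]
      assoc_mult_mat[OF Phi_carrier pow_carrier_mat[OF Mm_carrier] Bp_carrier, of ?k]
    unfolding Al_pow_Phi by simp
  also have "(Phi * (Mm ^\<^sub>m ?k * Bp)) $$ (i, j mod m) = (Phi * reach_mat Mm Bp N) $$ (i,j)"
    using i j jm cl by (simp add: reach_mat_def)
  finally show "reach_mat Al (B_mat p m l) N $$ (i,j) = (Phi * reach_mat Mm Bp N) $$ (i,j)" .
qed (auto simp: reach_mat_def)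

end



context lsys begin

lemma BE_E: assumes b: "b < l" shows "BE * Emat b = (if b = 0 then B else 0\<^sub>m n m)"
proof (rule eq_matI)
  fix i r assume "i < dim_row (if b = 0 then B else 0\<^sub>m n m)" "r < dim_col (if b = 0 then B else 0\<^sub>m n m)"
  then have i: "i < n" and r: "r < m" by (auto split: if_splits)
  have lt: "b*m + r < m*l"
  proof -
    have "b*m + r < (b+1)*m" using r by simp
    also have "\<dots> \<le> l*m" using b by (intro mult_le_mono1) simp
    finally show ?thesis by (simp add: mult.commute)
  qed
  have "(BE * Emat b) $$ (i,r) = (\<Sum>t\<in>{0..<m*l}. BE $$ (i,t) * (if t = b*m + r then 1 else 0))"
    using i r by (auto simp: scalar_prod_def Emat_def intro!: sum.cong)
  also have "\<dots> = BE $$ (i, b*m + r)" using lt by (subst sum_delta_nat') simp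
  also have "\<dots> = (if b = 0 then B $$ (i,r) else 0)"
  proof (cases "b = 0")
    case False
    then have "\<not> b*m + r < m" by (metis add_lessD1 le_add1 less_le_trans mult_le_mono1 not_less mult_1 One_nat_def Suc_leI zero_less_iff_neq_zero)
    then show ?thesis using i lt False by (simp add: BE_def)
  qed (use i r lt in \<open>simp add: BE_def\<close>)
  finally show "(BE * Emat b) $$ (i,r) = (if b = 0 then B else 0\<^sub>m n m) $$ (i,r)" using i r by simp
qed auto

lemma S_E: assumes b: "b < l" shows "shift_mat m l * Emat b = (if b = 0 then 0\<^sub>m (m*l) m else Emat (b - 1))"
proof (rule eq_matI)
  fix i r assume "i < dim_row (if b = 0 then 0\<^sub>m (m*l) m else Emat (b - 1))"
    "r < dim_col (if b = 0 then 0\<^sub>m (m*l) m else Emat (b - 1))"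
  then have i: "i < m*l" and r: "r < m" by (auto split: if_splits)
  have "(shift_mat m l * Emat b) $$ (i,r) = (if i + m < m*l then (if i + m = b*m + r then 1 else 0) else 0)"
    unfolding shift_mult_left[OF Emat_carrier] using i r by (simp add: Emat_def)
  also have "\<dots> = (if b = 0 then 0\<^sub>m (m*l) m else Emat (b - 1)) $$ (i,r)"
  proof (cases "b = 0")
    case True
    have ne: "i + m \<noteq> b*m + r" using True r by simp
    have L: "(if i + m < m*l then (if i + m = b*m + r then 1 else 0) else 0) = (0::real)"
      using ne by (simp only: if_False if_cancel)
    have R0: "(if b = 0 then 0\<^sub>m (m*l) m else Emat (b - 1)) = 0\<^sub>m (m*l) m" using True by (simp only: simp_thms if_True)
    show ?thesis unfolding L R0 using i r by simp
  next
    case False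
    have bm: "b*m = (b-1)*m + m" using False by (cases b) auto
    have lt: "b*m + r < m*l"
    proof -
      have "b*m + r < (b+1)*m" using r by simp
      also have "\<dots> \<le> l*m" using b by (intro mult_le_mono1) simp
      finally show ?thesis by (simp add: mult.commute)
    qed
    have "(i + m = b*m + r) = (i = (b-1)*m + r)" using bm by linarith
    then show ?thesis using False i r lt bm by (auto simp: Emat_def)
  qed
  finally show "(shift_mat m l * Emat b) $$ (i,r) = (if b = 0 then 0\<^sub>m (m*l) m else Emat (b - 1)) $$ (i,r)" .
qed auto

lemma MmV: "Mm * V j = V (Suc j)"
proof -
  have "Mm * V j = four_block_mat (A * Vtop j + BE * Vbot j) (A * 0\<^sub>m n 0 + BE * 0\<^sub>m (m*l) 0)
     (0\<^sub>m (m*l) n * Vtop j + shift_mat m l * Vbot j) (0\<^sub>m (m*l) n * 0\<^sub>m n 0 + shift_mat m l * 0\<^sub>m (m*l) 0)"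
    unfolding Mm_def V_def
    by (rule mult_four_block_mat[OF A BE_carrier zero_carrier_mat shift_carrier Vtop_carrier zero_carrier_mat Vbot_carrier zero_carrier_mat])
  also have "\<dots> = V (Suc j)" unfolding V_def
  proof (rule cong_four_block_mat)
    show "A * Vtop j + BE * Vbot j = Vtop (Suc j)"
    proof (cases "Suc j < l")
      case True
      then have ne: "l - 1 - j \<noteq> 0" by simp
      show ?thesis using True ne BE_E[of "l - 1 - j"] by (simp add: Vtop_def Vbot_def)
    next
      case False
      show ?thesis
      proof (cases "Suc j = l")
        case True
        then show ?thesis using BE_E[of 0] l1 by (simp add: Vtop_def Vbot_def)
      next
        case False2: False
        then have jl: "\<not> j < l" "Suc j - l = Suc (j - l)" using False by auto
        have "A * (A ^\<^sub>m (j - l) * B) = A ^\<^sub>m (Suc (j - l)) * B"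
          using assoc_mult_mat[OF A pow_carrier_mat[OF A] B, of "j-l", symmetric] pow_comm[OF A, of "j-l"] by simp
        moreover have "A ^\<^sub>m (j - l) * A * B \<in> carrier_mat n m" using ApowB_carrier[of "Suc (j-l)"] by simp
        ultimately show ?thesis using jl by (simp add: Vtop_def Vbot_def)
      qed
    qed
    show "0\<^sub>m (m*l) n * Vtop j + shift_mat m l * Vbot j = Vbot (Suc j)"
    proof (cases "Suc j < l")
      case True
      then have ne: "l - 1 - j \<noteq> 0" "l - 1 - j - 1 = l - 1 - Suc j" by auto
      show ?thesis using True ne S_E[of "l - 1 - j"] by (simp add: Vtop_def Vbot_def)
    next
      case False
      show ?thesis
      proof (cases "Suc j = l")
        case True
        then show ?thesis using S_E[of 0] l1 by (simp add: Vtop_def Vbot_def)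
      next
        case False2: False
        then have jl: "\<not> j < l" using False by auto
        then show ?thesis using False by (simp add: Vtop_def Vbot_def)
      qed
    qed
  qed (auto intro!: eq_matI)
  finally show ?thesis .
qed

lemma V0: "Bp = V 0"
proof (rule eq_matI)
  fix i r assume "i < dim_row (V 0)" "r < dim_col (V 0)"
  then have i: "i < n + m*l" and r: "r < m" by auto
  have l0: "0 < l" using l1 by simp
  have e: "m*l - m = (l-1)*m" using diff_mult_distrib[of l 1 m] by (simp add: mult.commute)
  show "Bp $$ (i,r) = V 0 $$ (i,r)"
  proof (cases "i < n")
    case True
    have ml: "m \<le> m*l" using l1 by simp
    have "i \<noteq> n + m*l - m + r" using True ml by linarith
    then show ?thesis using True i r l0 by (simp add: Bp_def V_def Vtop_def Vbot_def)
  next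
    case False
    have ml: "m \<le> m*l" using l1 by simp
    have "(i = n + m*l - m + r) = (i - n = (l - 1 - 0) * m + r)" unfolding diff_zero e[symmetric] using False ml by linarith
    then show ?thesis using False i r l0 by (simp add: Bp_def V_def Vtop_def Vbot_def Emat_def)
  qed
qed auto

lemma Mm_pow_V: "Mm ^\<^sub>m k * V j = V (j + k)"
proof (induction k arbitrary: j)
  case 0 then show ?case by simp
next
  case (Suc k)
  have "Mm ^\<^sub>m Suc k * V j = Mm ^\<^sub>m k * (Mm * V j)"
    using assoc_mult_mat[OF pow_carrier_mat[OF Mm_carrier] Mm_carrier V_carrier, of k j] by simp
  also have "\<dots> = V (Suc j + k)" unfolding MmV Suc by simp
  finally show ?case by simp
qed

lemma Mm_pow_Bp: "Mm ^\<^sub>m k * Bp = V k"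
  using Mm_pow_V[of k 0] V0 by simp

end



context lsys begin

lemma cs_mult_sub:
  fixes P X :: "real mat"
  assumes P: "P \<in> carrier_mat N k" and X: "X \<in> carrier_mat k c"
  shows "vec_space.col_space N (P * X) \<subseteq> vec_space.col_space N P"
proof -
  interpret vs: vec_space "TYPE(real)" N .
  have PX: "P * X \<in> carrier_mat N c" using P X by simp
  show ?thesis
  proof
    fix y assume "y \<in> vs.col_space (P * X)"
    then obtain x where x: "x \<in> carrier_vec c" "y = (P * X) *\<^sub>v x" "y \<in> carrier_vec N"
      unfolding vs.col_space_eq[OF PX] using PX by auto
    have "y = P *\<^sub>v (X *\<^sub>v x)" using x P X by simp
    moreover have "X *\<^sub>v x \<in> carrier_vec k" using X x by simp
    ultimately show "y \<in> vs.col_space P" unfolding vs.col_space_eq[OF P] using P x(3) by auto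
  qed
qed

lemma dir1: "vec_space.rank (p*l+m*l) (reach_mat Al (B_mat p m l) N) \<le> n + m*l"
proof -
  interpret vs: vec_space "TYPE(real)" "p*l+m*l" .
  have X: "reach_mat Mm Bp N \<in> carrier_mat (n+m*l) (m*N)" by (simp add: reach_mat_def)
  have K: "reach_mat Al (B_mat p m l) N \<in> carrier_mat (p*l+m*l) (m*N)" by (simp add: reach_mat_def)
  have "vs.rank (reach_mat Al (B_mat p m l) N) \<le> vs.rank Phi"
    using vs.rank_mono_cs[OF K Phi_carrier] cs_mult_sub[OF Phi_carrier X] unfolding reach_eq by simp
  also have "\<dots> \<le> n + m*l" by (rule vs.rank_le_nc[OF Phi_carrier])
  finally show ?thesis .
qed

lemma Phi_surj:
  assumes pl: "p*l = n" and w: "w \<in> carrier_vec (p*l+m*l)"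
  shows "\<exists>z \<in> carrier_vec (n+m*l). Phi *\<^sub>v z = w"
proof -
  have OL': "OL \<in> carrier_mat n n" using OL pl by simp
  have Ob': "Ob \<in> carrier_mat n n" using Ob_carrier pl by simp
  have OOL: "Ob * OL = 1\<^sub>m n" by (rule mat_mult_left_right_inverse[OF OL' Ob' inv])
  define y where "y = vec_first w (p*l)"
  define u where "u = vec_last w (m*l)"
  have y: "y \<in> carrier_vec (p*l)" and u: "u \<in> carrier_vec (m*l)" by (simp_all add: y_def u_def)
  have wyu: "w = y @\<^sub>v u" using w by (simp add: y_def u_def)
  define v where "v = y - T *\<^sub>v u"
  have v: "v \<in> carrier_vec n" by (rule carrier_vecI) (use pl in \<open>simp add: v_def\<close>)
  define z where "z = (OL *\<^sub>v v) @\<^sub>v u"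
  have zc: "z \<in> carrier_vec (n+m*l)" by (rule carrier_vecI) (use u in \<open>simp add: z_def\<close>)
  have "Phi *\<^sub>v z = (Ob *\<^sub>v (OL *\<^sub>v v) + T *\<^sub>v u) @\<^sub>v (0\<^sub>m (m*l) n *\<^sub>v (OL *\<^sub>v v) + 1\<^sub>m (m*l) *\<^sub>v u)"
    unfolding Phi_def z_def
    by (rule four_block_mat_mult_vec[OF Ob_carrier T_carrier zero_carrier_mat one_carrier_mat]) (use v u OL pl in auto)
  also have "Ob *\<^sub>v (OL *\<^sub>v v) = v"
    using assoc_mult_mat_vec[OF Ob' OL' v, symmetric] OOL v by simp
  also have "v + T *\<^sub>v u = y" unfolding v_def
    by (rule eq_vecI) (use y u in auto)
  also have "0\<^sub>m (m*l) n *\<^sub>v (OL *\<^sub>v v) + 1\<^sub>m (m*l) *\<^sub>v u = u"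
    using u v OL pl by (intro eq_vecI) auto
  finally show ?thesis using zc wyu by auto
qed

end



lemma divmod_helper:
  fixes c r m N :: nat assumes "c < N" "r < m"
  shows "c*m + r < m*N" "(c*m + r) div m = c" "(c*m + r) mod m = r"
proof -
  have "c*m + r < (c+1)*m" using assms by simp
  also have "\<dots> \<le> N*m" using assms by (intro mult_le_mono1) simp
  finally show "c*m + r < m*N" by (simp add: mult.commute)
  show "(c*m + r) div m = c" "(c*m + r) mod m = r" using assms by auto
qed

context lsys begin

lemma colX: assumes J: "J < m*N"
  shows "col (reach_mat Mm Bp N) J = col (V (N - 1 - J div m)) (J mod m)"
proof -
  have jm: "J mod m < m" using m1 by simp
  show ?thesis using J jm by (intro eq_vecI) (auto simp: reach_mat_def Mm_pow_Bp)
qed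

lemma colV_entry: assumes i: "i < n + m*l" and r: "r < m"
  shows "V k $$ (i,r) = (if i < n then Vtop k $$ (i,r) else Vbot k $$ (i - n, r))"
  using i r by (simp add: V_def)

lemma cols_sub:
  assumes pl: "p*l = n"
  defines "Y1 \<equiv> four_block_mat (reach_mat A B n) (0\<^sub>m n (m*l)) (0\<^sub>m (m*l) (m*n)) (1\<^sub>m (m*l))"
  shows "set (cols Y1) \<subseteq> set (cols (reach_mat Mm Bp (p*l+m*l)))"
proof
  let ?N = "p*l+m*l"
  let ?X = "reach_mat Mm Bp ?N"
  have Rn: "reach_mat A B n \<in> carrier_mat n (m*n)" by (simp add: reach_mat_def)
  have Y1c: "Y1 \<in> carrier_mat (n+m*l) (m*n+m*l)" unfolding Y1_def using Rn by simp
  have ml: "l \<le> m*l" using m1 by simp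
  fix v assume "v \<in> set (cols Y1)"
  then obtain j where j: "j < m*n + m*l" and v: "v = col Y1 j" using Y1c by (auto simp: cols_def)
  have "\<exists>J < m*?N. col Y1 j = col ?X J"
  proof (cases "j < m*n")
    case True
    define q where "q = j div m"
    define r where "r = j mod m"
    have r: "r < m" using m1 r_def by simp
    have q: "q < n" using True q_def m1 by (simp add: div_less_iff_less_mult mult.commute)
    define c where "c = m*l - l + q"
    have c: "c < ?N" using q ml pl unfolding c_def by linarith
    note dh = divmod_helper[OF c r]
    have k: "?N - 1 - c = l + (n - 1 - q)" using q ml pl unfolding c_def by linarith
    have "col Y1 j = col ?X (c*m + r)"
    proof (rule eq_vecI)
      fix i assume "i < dim_vec (col ?X (c*m + r))"
      then have i: "i < n + m*l" using pl by (simp add: reach_mat_def)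
      have "col ?X (c*m + r) $ i = col (V (l + (n - 1 - q))) r $ i"
        using colX[OF dh(1)] dh(2,3) k by simp
      also have "\<dots> = (if i < n then (A ^\<^sub>m (n - 1 - q) * B) $$ (i,r) else 0)"
        using i r by (simp add: colV_entry Vtop_def Vbot_def)
      also have "\<dots> = col Y1 j $ i"
        using i r j True Rn unfolding Y1_def q_def r_def by (simp add: reach_mat_def)
      finally show "col Y1 j $ i = col ?X (c*m + r) $ i" by simp
    qed (use Y1c pl in \<open>simp add: reach_mat_def\<close>)
    then show ?thesis using dh(1) by blast
  next
    case False
    define j2 where "j2 = j - m*n"
    have j2: "j2 < m*l" using j False j2_def by linarith
    define b where "b = j2 div m"
    define r where "r = j2 mod m"
    have r: "r < m" using m1 r_def by simp
    have b: "b < l" using j2 b_def m1 by (simp add: div_less_iff_less_mult mult.commute)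
    have j2e: "j2 = b*m + r" using b_def r_def by simp
    define c where "c = ?N - l + b"
    have c: "c < ?N" using b ml unfolding c_def by linarith
    note dh = divmod_helper[OF c r]
    have k: "?N - 1 - c = l - 1 - b" using b ml unfolding c_def by linarith
    have "col Y1 j = col ?X (c*m + r)"
    proof (rule eq_vecI)
      fix i assume "i < dim_vec (col ?X (c*m + r))"
      then have i: "i < n + m*l" using pl by (simp add: reach_mat_def)
      have kl: "l - 1 - b < l" "l - 1 - (l - 1 - b) = b" using b by auto
      have "col ?X (c*m + r) $ i = col (V (l - 1 - b)) r $ i"
        using colX[OF dh(1)] dh(2,3) k by simp
      also have "\<dots> = (if i < n then 0 else (if i - n = b*m + r then 1 else 0))"
        using i r kl by (simp add: colV_entry Vtop_def Vbot_def Emat_def)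
      also have "\<dots> = col Y1 j $ i"
      proof -
        have jj: "j - m*n = b*m + r" using j2e j2_def by simp
        show ?thesis using i r j False Rn jj unfolding Y1_def by (simp add: reach_mat_def)
      qed
      finally show "col Y1 j $ i = col ?X (c*m + r) $ i" by simp
    qed (use Y1c pl in \<open>simp add: reach_mat_def\<close>)
    then show ?thesis using dh(1) by blast
  qed
  then obtain J where J: "J < m*?N" "col Y1 j = col ?X J" by blast
  then show "v \<in> set (cols ?X)" using v by (auto simp: cols_def reach_mat_def)
qed

end



context lsys begin

lemma dir2:
  assumes pl: "p*l = n" and rk: "vec_space.rank n (reach_mat A B n) = n"
  shows "vec_space.rank (p*l+m*l) (reach_mat Al (B_mat p m l) (p*l+m*l)) = p*l+m*l"
proof -
  interpret vs: vec_space "TYPE(real)" "p*l+m*l" .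
  interpret vn: vec_space "TYPE(real)" n .
  interpret vz: vec_space "TYPE(real)" "n+m*l" .
  let ?N = "p*l+m*l"
  let ?X = "reach_mat Mm Bp ?N"
  let ?K = "reach_mat Al (B_mat p m l) ?N"
  let ?Rn = "reach_mat A B n"
  let ?Y1 = "four_block_mat ?Rn (0\<^sub>m n (m*l)) (0\<^sub>m (m*l) (m*n)) (1\<^sub>m (m*l))"
  have Rn: "?Rn \<in> carrier_mat n (m*n)" by (simp add: reach_mat_def)
  have Y1c: "?Y1 \<in> carrier_mat (n+m*l) (m*n+m*l)" using Rn by simp
  have Xc: "?X \<in> carrier_mat (n+m*l) (m*?N)" by (simp add: reach_mat_def)
  have Kc: "?K \<in> carrier_mat ?N (m*?N)" by (simp add: reach_mat_def)
  have csRn: "vn.col_space ?Rn = carrier_vec n" by (rule vn.full_rank_cs[OF Rn rk])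
  have csY1: "carrier_vec (n+m*l) \<subseteq> vz.col_space ?Y1"
  proof
    fix z :: "real vec" assume z: "z \<in> carrier_vec (n+m*l)"
    define x0 where "x0 = vec_first z n"
    define u where "u = vec_last z (m*l)"
    have x0: "x0 \<in> carrier_vec n" and u: "u \<in> carrier_vec (m*l)" by (simp_all add: x0_def u_def)
    have zz: "z = x0 @\<^sub>v u" using z by (simp add: x0_def u_def)
    obtain y where y: "y \<in> carrier_vec (m*n)" "?Rn *\<^sub>v y = x0"
      using x0 csRn unfolding vn.col_space_eq[OF Rn] using Rn by auto
    have "?Y1 *\<^sub>v (y @\<^sub>v u) = (?Rn *\<^sub>v y + 0\<^sub>m n (m*l) *\<^sub>v u) @\<^sub>v (0\<^sub>m (m*l) (m*n) *\<^sub>v y + 1\<^sub>m (m*l) *\<^sub>v u)"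
      by (rule four_block_mat_mult_vec[OF Rn zero_carrier_mat zero_carrier_mat one_carrier_mat y(1) u])
    also have "\<dots> = z"
    proof -
      have a: "0\<^sub>m n (m*l) *\<^sub>v u = 0\<^sub>v n" using u by (intro eq_vecI) auto
      have b: "0\<^sub>m (m*l) (m*n) *\<^sub>v y = 0\<^sub>v (m*l)" using y(1) by (intro eq_vecI) auto
      show ?thesis unfolding zz y(2) a b using x0 u by simp
    qed
    finally have "?Y1 *\<^sub>v (y @\<^sub>v u) = z" .
    moreover have "y @\<^sub>v u \<in> carrier_vec (m*n + m*l)" using y u by simp
    ultimately show "z \<in> vz.col_space ?Y1" unfolding vz.col_space_eq[OF Y1c] using Y1c z carrier_matD[OF Rn] by auto
  qed
  have "vz.col_space ?Y1 \<subseteq> vz.col_space ?X"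
    unfolding vz.col_space_def using cols_sub[OF pl] by (intro vz.span_is_monotone) simp
  then have csX: "carrier_vec (n+m*l) \<subseteq> vz.col_space ?X" using csY1 by blast
  have "vs.col_space ?K = carrier_vec ?N"
  proof
    show "vs.col_space ?K \<subseteq> carrier_vec ?N" unfolding vs.col_space_eq[OF Kc] using Kc by auto
  next
    show "carrier_vec ?N \<subseteq> vs.col_space ?K"
    proof
      fix w :: "real vec" assume w: "w \<in> carrier_vec ?N"
      obtain z where z: "z \<in> carrier_vec (n+m*l)" "Phi *\<^sub>v z = w" using Phi_surj[OF pl w] by blast
      obtain x where x: "x \<in> carrier_vec (m*?N)" "?X *\<^sub>v x = z"
        using csX z(1) unfolding vz.col_space_eq[OF Xc] using Xc by auto
      have "?K *\<^sub>v x = w" unfolding reach_eq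
        using assoc_mult_mat_vec[OF Phi_carrier Xc x(1)] x(2) z(2) by simp
      then show "w \<in> vs.col_space ?K" unfolding vs.col_space_eq[OF Kc] using Kc w x(1) by auto
    qed
  qed
  then show ?thesis by (rule vs.cs_full_rank[OF Kc])
qed

end

theorem lemma2:
  fixes A B C OL :: "real mat" and n m p :: nat
  assumes "A \<in> carrier_mat n n" and "B \<in> carrier_mat n m" and "C \<in> carrier_mat p n"
    and "observable A C" and "reachable A B"
    and "OL \<in> carrier_mat n (p * obs_index A C)"
    and "OL * obs_mat A C (obs_index A C) = 1\<^sub>m n"
  shows "reachable (A_mat A B C OL (obs_index A C)) (B_mat p m (obs_index A C))
         \<longleftrightarrow> p * obs_index A C = n"
proof -
  note Ac = assms(1) and Bc = assms(2) and Cc = assms(3)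
  define l where "l = obs_index A C"
  have dA: "dim_row A = n" using Ac by simp
  have Obc: "obs_mat A C k \<in> carrier_mat (p*k) n" for k using Ac Cc by (simp add: obs_mat_def)
  have obsn: "mrank (obs_mat A C n) = n" using assms(4) dA by (simp add: observable_def)
  have rkO: "mrank (obs_mat A C l) = n" unfolding l_def obs_index_def dA
    by (rule LeastI[of _ n]) (rule obsn)
  have rkO': "vec_space.rank (p*l) (obs_mat A C l) = n" using rkO Obc[of l] by (simp add: mrank_def)
  have nle: "n \<le> p*l" using vec_space.rank_le_nr[OF Obc[of l]] rkO' by simp
  have Rc: "reach_mat A B n \<in> carrier_mat n (m*n)" using Ac Bc by (simp add: reach_mat_def)
  have rkR: "vec_space.rank n (reach_mat A B n) = n"
    using assms(5) dA Rc by (simp add: reachable_def mrank_def)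
  show ?thesis
  proof (cases "n = 0")
    case True
    have Ob0: "obs_mat A C 0 \<in> carrier_mat 0 n" using Obc[of 0] by simp
    have "mrank (obs_mat A C 0) = 0"
      using vec_space.rank_le_nr[OF Ob0] Ob0 by (simp add: mrank_def)
    then have "mrank (obs_mat A C 0) = dim_row A" using True dA by simp
    then have l0: "l = 0" unfolding l_def obs_index_def by (rule Least_eq_0)
    let ?Al = "A_mat A B C OL 0"
    have dAl: "dim_row ?Al = 0" by (simp add: A_mat_def F_mat_def L_mat_def Z_mat_def Let_def)
    have Kc: "reach_mat ?Al (B_mat p m 0) 0 \<in> carrier_mat 0 (dim_col (B_mat p m 0) * 0)"
      using dAl by (simp add: reach_mat_def)
    have "mrank (reach_mat ?Al (B_mat p m 0) 0) = 0"
      using vec_space.rank_le_nr[OF Kc] Kc by (simp add: mrank_def)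
    then show ?thesis using l0 True dAl unfolding l_def[symmetric] by (simp add: reachable_def)
  next
    case False
    have l1: "1 \<le> l"
    proof (rule ccontr)
      assume "\<not> 1 \<le> l" then have "l = 0" by simp
      then show False using nle False by simp
    qed
    have m1: "1 \<le> m"
    proof (rule ccontr)
      assume "\<not> 1 \<le> m" then have "m = 0" by simp
      then show False using vec_space.rank_le_nc[OF Rc] rkR False by simp
    qed
    interpret ls: lsys A B C OL n m p l
      by unfold_locales (use assms l1 m1 in \<open>simp_all add: l_def\<close>)
    have Kc: "reach_mat ls.Al (B_mat p m l) (p*l+m*l) \<in> carrier_mat (p*l+m*l) (m*(p*l+m*l))"
      by (simp add: reach_mat_def)
    have reach_iff: "reachable ls.Al (B_mat p m l) \<longleftrightarrow>
        vec_space.rank (p*l+m*l) (reach_mat ls.Al (B_mat p m l) (p*l+m*l)) = p*l+m*l"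
      using Kc by (simp add: reachable_def mrank_def)
    show ?thesis unfolding l_def[symmetric] reach_iff
    proof
      assume h: "vec_space.rank (p*l+m*l) (reach_mat ls.Al (B_mat p m l) (p*l+m*l)) = p*l+m*l"
      then have "p*l + m*l \<le> n + m*l" using ls.dir1[of "p*l+m*l"] by simp
      then show "p*l = n" using nle by simp
    next
      assume "p*l = n"
      then show "vec_space.rank (p*l+m*l) (reach_mat ls.Al (B_mat p m l) (p*l+m*l)) = p*l+m*l"
        by (rule ls.dir2[OF _ rkR])
    qed
  qed
qed

end
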